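(* Assume the two-period setup below. (a) Suppose Parallel Trends holds. (a-Cont) If the treatment is continuous (Continuous Treatment condition) and the map $(a,b)\mapsto ATT(a|b)$ is differentiable on $\mathcal{D}_+\times\mathcal{D}_+$, then for every $d\in\mathcal{D}_+$, $$\frac{\partial \mathbb{E}[\Delta Y\mid D=d]}{\partial d}=ACRT(d|d)+\frac{\partial ATT(d|l)}{\partial l}\Big|_{l=d}.$$ (a-MV) If the treatment is multi-valued (Multi-Valued Treatment condition), then for every $j=1,\dots,J$, $$\mathbb{E}[\Delta Y\mid D=d_j]-\mathbb{E}[\Delta Y\mid D=d_{j-1}]=ACRT(d_j|d_j)+\big(ATT(d_{j-1}|d_j)-ATT(d_{j-1}|d_{j-1})\big).$$ (b) Suppose Strong Parallel Trends holds. (b-Cont) Under the Continuous Treatment condition, $d\mapsto \mathbb{E}[Y_t(d)]$ is differentiable on $\mathcal{D}_+$ and for every $d\in\mathcal{D}_+$, $\frac{\partial \mathbb{E}[\Delta Y\mid D=d]}{\partial d}=ACR(d)$. (b-MV) Under the Multi-Valued Treatment condition, for every $j=1,\dots,J$, $\mathbb{E}[\Delta Y\mid D=d_j]-\mathbb{E}[\Delta Y\mid D=d_{j-1}]=ACR(d_j)$.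
   Context: Two-period setup. There are two periods $t-1$ and $t$. For each dose $d$ in the support $\mathcal{D}$ of a scalar treatment $D\ge 0$, each unit has potential outcomes $Y_{t-1}(d),Y_t(d)$ (all with finite means). Assumptions: (Random sampling) the observed data $\{Y_{it},Y_{i,t-1},D_i\}_{i=1}^n$ are i.i.d.; (Support) $\mathcal{D}=\{0\}\cup\mathcal{D}_+$ with $\mathcal{D}_+\subset(0,\infty)$, $\mathbb{P}(D=0)>0$ and every $d\in\mathcal{D}_+$ lies in the support of $D$, and no unit is treated in period $t-1$; (No anticipation / observed outcomes) $Y_{t-1}=Y_{t-1}(0)$ and $Y_t=Y_t(D)$. Write $\Delta Y:=Y_t-Y_{t-1}$. Continuous Treatment condition: $\mathcal{D}_+=[d_L,d_U]$ with $0<d_L<d_U<\infty$, $\mathbb{P}(D=0)>0$, $D$ has a density $f_D$ on $\mathcal{D}_+$ with $f_D(d)>0$ for all $d\in\mathcal{D}_+$, and $d\mapsto\mathbb{E}[\Delta Y\mid D=d]$ is continuously differentiable on $\mathcal{D}_+$. Multi-Valued Treatment condition: $\mathcal{D}_+=\{d_1,\dots,d_J\}$ with $0<d_1<\dots<d_J$, $\mathbb{P}(D=d)>0$ for all $d\in\mathcal{D}$; set $d_0:=0$. Parameters: $ATT(a|b):=\mathbb{E}[Y_t(a)-Y_t(0)\mid D=b]$ (so $ATT(0|b)=0$); $ATE(d):=\mathbb{E}[Y_t(d)-Y_t(0)]$. Continuous case: $ACRT(d|d):=\frac{\partial \mathbb{E}[Y_t(l)\mid D=d]}{\partial l}\big|_{l=d}$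 and $ACR(d):=\frac{\partial\mathbb{E}[Y_t(d)]}{\partial d}$. Discrete case: $ACRT(d_j|d_j):=\mathbb{E}[Y_t(d_j)-Y_t(d_{j-1})\mid D=d_j]$ and $ACR(d_j):=\mathbb{E}[Y_t(d_j)-Y_t(d_{j-1})]$. Parallel Trends: for all $d\in\mathcal{D}$, $\mathbb{E}[Y_t(0)-Y_{t-1}(0)\mid D=d]=\mathbb{E}[Y_t(0)-Y_{t-1}(0)\mid D=0]$. Strong Parallel Trends: for all $d\in\mathcal{D}$, $\mathbb{E}[Y_t(d)-Y_{t-1}(0)]=\mathbb{E}[Y_t(d)-Y_{t-1}(0)\mid D=d]$. *)

theory Defs
  imports "HOL-Probability.Probability"
begin

text \<open>Conditional expectations given D = d are taken with respect to a fixed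
regular conditional distribution K of the sample point given D, which is
proper (K d is concentrated on the event D = d) for every d in the support S.\<close>

definition reg_cond_dist ::
  "'a measure \<Rightarrow> ('a \<Rightarrow> real) \<Rightarrow> real set \<Rightarrow> (real \<Rightarrow> 'a measure) \<Rightarrow> bool" where
  "reg_cond_dist M D S K \<longleftrightarrow>
     (\<forall>d. prob_space (K d) \<and> sets (K d) = sets M) \<and>
     (\<forall>A\<in>sets M. (\<lambda>d. emeasure (K d) A) \<in> borel_measurable borel) \<and>
     (\<forall>A\<in>sets M. \<forall>B\<in>sets borel.
        emeasure M (A \<inter> (D -` B \<inter> space M))
          = (\<integral>\<^sup>+ x. indicator B x * emeasure (K x) A \<partial>(distr M borel D))) \<and>
     (\<forall>d\<in>S. AE \<omega> in K d. D \<omega> = d)"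

definition condE :: "(real \<Rightarrow> 'a measure) \<Rightarrow> ('a \<Rightarrow> real) \<Rightarrow> real \<Rightarrow> real" where
  "condE K X d = (\<integral>\<omega>. X \<omega> \<partial>(K d))"

text \<open>Observed outcome change Delta Y = Y_t - Y_{t-1} = Y_t(D) - Y_{t-1}(0);
Y1 a = Y_t(a), Y0 a = Y_{t-1}(a).\<close>
definition DeltaY :: "('a \<Rightarrow> real) \<Rightarrow> (real \<Rightarrow> 'a \<Rightarrow> real) \<Rightarrow> (real \<Rightarrow> 'a \<Rightarrow> real) \<Rightarrow> 'a \<Rightarrow> real" where
  "DeltaY D Y0 Y1 = (\<lambda>\<omega>. Y1 (D \<omega>) \<omega> - Y0 0 \<omega>)"

definition ATT :: "(real \<Rightarrow> 'a measure) \<Rightarrow> (real \<Rightarrow> 'a \<Rightarrow> real) \<Rightarrow> real \<Rightarrow> real \<Rightarrow> real" where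
  "ATT K Y1 a b = condE K (\<lambda>\<omega>. Y1 a \<omega> - Y1 0 \<omega>) b"

text \<open>Two-period setup with support S of the treatment (S = {0} union D_+).\<close>
definition two_period_setup ::
  "'a measure \<Rightarrow> ('a \<Rightarrow> real) \<Rightarrow> (real \<Rightarrow> 'a \<Rightarrow> real) \<Rightarrow> (real \<Rightarrow> 'a \<Rightarrow> real)
    \<Rightarrow> (real \<Rightarrow> 'a measure) \<Rightarrow> real set \<Rightarrow> bool" where
  "two_period_setup M D Y0 Y1 K S \<longleftrightarrow>
     prob_space M \<and> D \<in> borel_measurable M \<and>
     0 \<in> S \<and> S \<subseteq> {0..} \<and>
     (\<forall>a\<in>S. integrable M (Y1 a) \<and> integrable M (Y0 a)) \<and>
     (\<lambda>\<omega>. Y1 (D \<omega>) \<omega>) \<in> borel_measurable M \<and>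
     reg_cond_dist M D S K \<and>
     (\<forall>a\<in>S. \<forall>b\<in>S. integrable (K b) (Y1 a) \<and> integrable (K b) (Y0 0))"

definition parallel_trends ::
  "(real \<Rightarrow> 'a measure) \<Rightarrow> (real \<Rightarrow> 'a \<Rightarrow> real) \<Rightarrow> (real \<Rightarrow> 'a \<Rightarrow> real) \<Rightarrow> real set \<Rightarrow> bool" where
  "parallel_trends K Y0 Y1 S \<longleftrightarrow>
     (\<forall>d\<in>S. condE K (\<lambda>\<omega>. Y1 0 \<omega> - Y0 0 \<omega>) d = condE K (\<lambda>\<omega>. Y1 0 \<omega> - Y0 0 \<omega>) 0)"

definition strong_parallel_trends ::
  "'a measure \<Rightarrow> (real \<Rightarrow> 'a measure) \<Rightarrow> (real \<Rightarrow> 'a \<Rightarrow> real) \<Rightarrow> (real \<Rightarrow> 'a \<Rightarrow> real) \<Rightarrow> real set \<Rightarrow> bool" where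
  "strong_parallel_trends M K Y0 Y1 S \<longleftrightarrow>
     (\<forall>d\<in>S. (\<integral>\<omega>. Y1 d \<omega> - Y0 0 \<omega> \<partial>M) = condE K (\<lambda>\<omega>. Y1 d \<omega> - Y0 0 \<omega>) d)"

text \<open>Continuous Treatment condition with D_+ = [dL, dU] and density f on D_+.\<close>
definition continuous_treatment ::
  "'a measure \<Rightarrow> ('a \<Rightarrow> real) \<Rightarrow> (real \<Rightarrow> 'a \<Rightarrow> real) \<Rightarrow> (real \<Rightarrow> 'a \<Rightarrow> real)
    \<Rightarrow> (real \<Rightarrow> 'a measure) \<Rightarrow> real \<Rightarrow> real \<Rightarrow> (real \<Rightarrow> real) \<Rightarrow> bool" where
  "continuous_treatment M D Y0 Y1 K dL dU f \<longleftrightarrow>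
     0 < dL \<and> dL < dU \<and>
     measure M {\<omega>\<in>space M. D \<omega> \<in> insert 0 {dL..dU}} = 1 \<and>
     measure M {\<omega>\<in>space M. D \<omega> = 0} > 0 \<and>
     f \<in> borel_measurable borel \<and> (\<forall>d\<in>{dL..dU}. f d > 0) \<and>
     (\<forall>B\<in>sets borel. B \<subseteq> {dL..dU} \<longrightarrow>
        emeasure M {\<omega>\<in>space M. D \<omega> \<in> B} = (\<integral>\<^sup>+ x. ennreal (f x) * indicator B x \<partial>lborel)) \<and>
     (\<exists>m'. continuous_on {dL..dU} m' \<and>
        (\<forall>d\<in>{dL..dU}. ((\<lambda>l. condE K (DeltaY D Y0 Y1) l) has_real_derivative m' d)
                           (at d within {dL..dU})))"

text \<open>Multi-Valued Treatment condition with D_+ = {d_1 < ... < d_J}, d_0 = 0.\<close>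
definition multivalued_treatment ::
  "'a measure \<Rightarrow> ('a \<Rightarrow> real) \<Rightarrow> nat \<Rightarrow> (nat \<Rightarrow> real) \<Rightarrow> bool" where
  "multivalued_treatment M D J ds \<longleftrightarrow>
     1 \<le> J \<and> ds 0 = 0 \<and> (\<forall>i j. i < j \<and> j \<le> J \<longrightarrow> ds i < ds j) \<and>
     measure M {\<omega>\<in>space M. D \<omega> \<in> ds ` {0..J}} = 1 \<and>
     (\<forall>j\<le>J. measure M {\<omega>\<in>space M. D \<omega> = ds j} > 0)"

end

theory Submission
  imports Defs
begin

lemma condE_diff:
  assumes "integrable (K d) f" "integrable (K d) g"
  shows "condE K (\<lambda>\<omega>. f \<omega> - g \<omega>) d = condE K f d - condE K g d"
  using assms unfolding condE_def by (rule Bochner_Integration.integral_diff)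

lemma key:
  assumes S: "two_period_setup M D Y0 Y1 K S" and d: "d \<in> S"
  shows "condE K (DeltaY D Y0 Y1) d = condE K (Y1 d) d - condE K (Y0 0) d"
proof -
  have rc: "reg_cond_dist M D S K" and i1: "integrable (K d) (Y1 d)" and i0: "integrable (K d) (Y0 0)"
    and mY: "(\<lambda>\<omega>. Y1 (D \<omega>) \<omega>) \<in> borel_measurable M"
    and ii: "integrable M (Y0 0)"
    using S d unfolding two_period_setup_def by auto
  have sets: "sets (K d) = sets M" and ae: "AE \<omega> in K d. D \<omega> = d"
    using rc d unfolding reg_cond_dist_def by auto
  have m1: "(\<lambda>\<omega>. Y1 (D \<omega>) \<omega>) \<in> borel_measurable (K d)"
    by (subst measurable_cong_sets[OF sets refl]) (rule mY)
  have m0: "Y0 0 \<in> borel_measurable (K d)" using i0 by auto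
  have "condE K (DeltaY D Y0 Y1) d = condE K (\<lambda>\<omega>. Y1 d \<omega> - Y0 0 \<omega>) d"
    unfolding condE_def DeltaY_def
    apply (rule integral_cong_AE)
    using m1 m0 i1 apply auto[2]
    using ae by eventually_elim simp
  also have "\<dots> = condE K (Y1 d) d - condE K (Y0 0) d"
    by (rule condE_diff[of K d, OF i1 i0])
  finally show ?thesis .
qed

lemma lin_scale:
  fixes g' :: "real \<times> real \<Rightarrow> real"
  assumes "bounded_linear g'"
  shows "g' (x, y) = x * g' (1, 0) + y * g' (0, 1)"
proof -
  have "(x, y) = x *\<^sub>R (1, 0) + y *\<^sub>R (0::real, 1::real)" by simp
  then have "g' (x, y) = g' (x *\<^sub>R (1, 0) + y *\<^sub>R (0, 1))" by metis
  also have "\<dots> = x * g' (1, 0) + y * g' (0, 1)"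
    using linear_add[OF bounded_linear.linear[OF assms]] linear_scale[OF bounded_linear.linear[OF assms]]
    by (simp only: real_scaleR_def)
  finally show ?thesis .
qed

lemma partials:
  fixes g :: "real \<times> real \<Rightarrow> real"
  assumes g: "(g has_derivative g') (at (a, a) within T \<times> T)" and a: "a \<in> T"
  shows "((\<lambda>l. g (l, a)) has_real_derivative g' (1, 0)) (at a within T)"
    "((\<lambda>l. g (a, l)) has_real_derivative g' (0, 1)) (at a within T)"
    "((\<lambda>l. g (l, l)) has_real_derivative g' (1, 0) + g' (0, 1)) (at a within T)"
proof -
  have bl: "bounded_linear g'" using g by (rule has_derivative_bounded_linear)
  have c1: "((\<lambda>l. (l, a)) has_derivative (\<lambda>h. (h, 0))) (at a within T)"
    by (auto intro!: derivative_eq_intros)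
  have c2: "((\<lambda>l. (a, l)) has_derivative (\<lambda>h. (0, h))) (at a within T)"
    by (auto intro!: derivative_eq_intros)
  have c3: "((\<lambda>l. (l, l)) has_derivative (\<lambda>h. (h, h))) (at a within T)"
    by (auto intro!: derivative_eq_intros)
  have g1: "(g has_derivative g') (at ((\<lambda>l. (l, a)) a) within (\<lambda>l. (l, a)) ` T)"
    by (rule has_derivative_subset[OF g]) (use a in auto)
  have g2: "(g has_derivative g') (at ((\<lambda>l. (a, l)) a) within (\<lambda>l. (a, l)) ` T)"
    by (rule has_derivative_subset[OF g]) (use a in auto)
  have g3: "(g has_derivative g') (at ((\<lambda>l. (l, l)) a) within (\<lambda>l. (l, l)) ` T)"
    by (rule has_derivative_subset[OF g]) (use a in auto)
  show "((\<lambda>l. g (l, a)) has_real_derivative g' (1, 0)) (at a within T)"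
    apply (rule has_derivative_imp_has_field_derivative[OF diff_chain_within[OF c1 g1, unfolded o_def]])
    subgoal for x using lin_scale[OF bl, of x 0] by simp
    done
  show "((\<lambda>l. g (a, l)) has_real_derivative g' (0, 1)) (at a within T)"
    apply (rule has_derivative_imp_has_field_derivative[OF diff_chain_within[OF c2 g2, unfolded o_def]])
    subgoal for x using lin_scale[OF bl, of 0 x] by simp
    done
  show "((\<lambda>l. g (l, l)) has_real_derivative g' (1, 0) + g' (0, 1)) (at a within T)"
    apply (rule has_derivative_imp_has_field_derivative[OF diff_chain_within[OF c3 g3, unfolded o_def]])
    subgoal for x using lin_scale[OF bl, of x x] by (simp add: algebra_simps)
    done
qed

theorem proposition3:
  fixes M :: "'a measure" and D :: "'a \<Rightarrow> real"
    and Y0 Y1 :: "real \<Rightarrow> 'a \<Rightarrow> real" and K :: "real \<Rightarrow> 'a measure"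
  shows
   "(\<forall>dL dU f. continuous_treatment M D Y0 Y1 K dL dU f
        \<and> two_period_setup M D Y0 Y1 K (insert 0 {dL..dU})
        \<and> parallel_trends K Y0 Y1 (insert 0 {dL..dU})
        \<and> (\<forall>a\<in>{dL..dU}. \<forall>b\<in>{dL..dU}.
              (\<lambda>(x, y). ATT K Y1 x y) differentiable (at (a, b) within {dL..dU} \<times> {dL..dU}))
      \<longrightarrow> (\<forall>d\<in>{dL..dU}. \<exists>A B.
             ((\<lambda>l. condE K (Y1 l) d) has_real_derivative A) (at d within {dL..dU}) \<and>
             ((\<lambda>l. ATT K Y1 d l) has_real_derivative B) (at d within {dL..dU}) \<and>
             ((\<lambda>l. condE K (DeltaY D Y0 Y1) l) has_real_derivative (A + B))
                (at d within {dL..dU})))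
  \<and> (\<forall>J ds. multivalued_treatment M D J ds
        \<and> two_period_setup M D Y0 Y1 K (ds ` {0..J})
        \<and> parallel_trends K Y0 Y1 (ds ` {0..J})
      \<longrightarrow> (\<forall>j\<in>{1..J}.
             condE K (DeltaY D Y0 Y1) (ds j) - condE K (DeltaY D Y0 Y1) (ds (j - 1))
             = condE K (\<lambda>\<omega>. Y1 (ds j) \<omega> - Y1 (ds (j - 1)) \<omega>) (ds j)
               + (ATT K Y1 (ds (j - 1)) (ds j) - ATT K Y1 (ds (j - 1)) (ds (j - 1)))))
  \<and> (\<forall>dL dU f. continuous_treatment M D Y0 Y1 K dL dU f
        \<and> two_period_setup M D Y0 Y1 K (insert 0 {dL..dU})
        \<and> strong_parallel_trends M K Y0 Y1 (insert 0 {dL..dU})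
      \<longrightarrow> (\<forall>d\<in>{dL..dU}. \<exists>A.
             ((\<lambda>l. \<integral>\<omega>. Y1 l \<omega> \<partial>M) has_real_derivative A) (at d within {dL..dU}) \<and>
             ((\<lambda>l. condE K (DeltaY D Y0 Y1) l) has_real_derivative A) (at d within {dL..dU})))
  \<and> (\<forall>J ds. multivalued_treatment M D J ds
        \<and> two_period_setup M D Y0 Y1 K (ds ` {0..J})
        \<and> strong_parallel_trends M K Y0 Y1 (ds ` {0..J})
      \<longrightarrow> (\<forall>j\<in>{1..J}.
             condE K (DeltaY D Y0 Y1) (ds j) - condE K (DeltaY D Y0 Y1) (ds (j - 1))
             = (\<integral>\<omega>. Y1 (ds j) \<omega> - Y1 (ds (j - 1)) \<omega> \<partial>M)))"
proof (intro conjI allI impI ballI)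
  fix dL dU f d
  assume H: "continuous_treatment M D Y0 Y1 K dL dU f
        \<and> two_period_setup M D Y0 Y1 K (insert 0 {dL..dU})
        \<and> parallel_trends K Y0 Y1 (insert 0 {dL..dU})
        \<and> (\<forall>a\<in>{dL..dU}. \<forall>b\<in>{dL..dU}.
              (\<lambda>(x, y). ATT K Y1 x y) differentiable (at (a, b) within {dL..dU} \<times> {dL..dU}))"
    and d: "d \<in> {dL..dU}"
  let ?S = "insert 0 {dL..dU}"
  have S: "two_period_setup M D Y0 Y1 K ?S" and PT: "parallel_trends K Y0 Y1 ?S" using H by auto
  have int: "\<And>a b. a \<in> ?S \<Longrightarrow> b \<in> ?S \<Longrightarrow> integrable (K b) (Y1 a) \<and> integrable (K b) (Y0 0)"
    using S unfolding two_period_setup_def by auto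
  obtain g' where g: "((\<lambda>(x, y). ATT K Y1 x y) has_derivative g') (at (d, d) within {dL..dU} \<times> {dL..dU})"
    using H d unfolding differentiable_def by blast
  note P = partials[OF g d, simplified]
  define c where "c = condE K (\<lambda>\<omega>. Y1 0 \<omega> - Y0 0 \<omega>) 0"
  have e1: "condE K (Y1 l) d = ATT K Y1 l d + condE K (Y1 0) d" if l: "l \<in> {dL..dU}" for l
    unfolding ATT_def using condE_diff[of K d "Y1 l" "Y1 0"] int[of l d] int[of 0 d] l d by auto
  have e2: "condE K (DeltaY D Y0 Y1) l = ATT K Y1 l l + c" if l: "l \<in> {dL..dU}" for l
  proof -
    have "condE K (\<lambda>\<omega>. Y1 0 \<omega> - Y0 0 \<omega>) l = c"
      using PT l unfolding parallel_trends_def c_def by auto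
    then have "condE K (Y1 0) l - condE K (Y0 0) l = c"
      using condE_diff[of K l "Y1 0" "Y0 0"] int[of 0 l] l by auto
    moreover have "ATT K Y1 l l = condE K (Y1 l) l - condE K (Y1 0) l"
      unfolding ATT_def using condE_diff[of K l "Y1 l" "Y1 0"] int[of l l] int[of 0 l] l by auto
    ultimately show ?thesis using key[OF S, of l] l by auto
  qed
  show "\<exists>A B.
             ((\<lambda>l. condE K (Y1 l) d) has_real_derivative A) (at d within {dL..dU}) \<and>
             ((\<lambda>l. ATT K Y1 d l) has_real_derivative B) (at d within {dL..dU}) \<and>
             ((\<lambda>l. condE K (DeltaY D Y0 Y1) l) has_real_derivative (A + B))
                (at d within {dL..dU})"
  proof (intro exI conjI)
    show "((\<lambda>l. condE K (Y1 l) d) has_real_derivative g' (1, 0)) (at d within {dL..dU})"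
      apply (rule has_field_derivative_transform_within[where d=1, OF _ _ d])
      using DERIV_add[OF P(1) DERIV_const[of "condE K (Y1 0) d"]] apply simp
      using e1 by auto
    show "((\<lambda>l. ATT K Y1 d l) has_real_derivative g' (0, 1)) (at d within {dL..dU})"
      using P(2) .
    show "((\<lambda>l. condE K (DeltaY D Y0 Y1) l) has_real_derivative g' (1, 0) + g' (0, 1)) (at d within {dL..dU})"
      apply (rule has_field_derivative_transform_within[where d=1, OF _ _ d])
      using DERIV_add[OF P(3) DERIV_const[of c]] apply simp
      using e2 by auto
  qed
next
  fix J ds j
  assume H: "multivalued_treatment M D J ds
        \<and> two_period_setup M D Y0 Y1 K (ds ` {0..J})
        \<and> parallel_trends K Y0 Y1 (ds ` {0..J})" and j: "j \<in> {1..J}"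
  let ?S = "ds ` {0..J}"
  have S: "two_period_setup M D Y0 Y1 K ?S" and PT: "parallel_trends K Y0 Y1 ?S" using H by auto
  have int: "\<And>a b. a \<in> ?S \<Longrightarrow> b \<in> ?S \<Longrightarrow> integrable (K b) (Y1 a) \<and> integrable (K b) (Y0 0)"
    using S unfolding two_period_setup_def by auto
  have z: "ds 0 = 0" using H unfolding multivalued_treatment_def by auto
  have a: "ds j \<in> ?S" "ds (j-1) \<in> ?S" "0 \<in> ?S"
  proof -
    show "ds j \<in> ?S" using j by (intro image_eqI[where x=j]) auto
    show "ds (j-1) \<in> ?S" using j by (intro image_eqI[where x="j-1"]) auto
    show "0 \<in> ?S" using z by (intro image_eqI[where x=0]) auto
  qed
  have pt: "condE K (\<lambda>\<omega>. Y1 0 \<omega> - Y0 0 \<omega>) (ds j) = condE K (\<lambda>\<omega>. Y1 0 \<omega> - Y0 0 \<omega>) (ds (j-1))"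
    using PT a unfolding parallel_trends_def by metis
  have cd: "\<And>x y b. x \<in> ?S \<Longrightarrow> y \<in> ?S \<Longrightarrow> b \<in> ?S \<Longrightarrow>
      condE K (\<lambda>\<omega>. Y1 x \<omega> - Y1 y \<omega>) b = condE K (Y1 x) b - condE K (Y1 y) b"
  proof -
    fix x y b assume "x \<in> ?S" "y \<in> ?S" "b \<in> ?S"
    then show "condE K (\<lambda>\<omega>. Y1 x \<omega> - Y1 y \<omega>) b = condE K (Y1 x) b - condE K (Y1 y) b"
      using int[of x b] int[of y b] by (intro condE_diff) auto
  qed
  have cd0: "\<And>b. b \<in> ?S \<Longrightarrow>
      condE K (\<lambda>\<omega>. Y1 0 \<omega> - Y0 0 \<omega>) b = condE K (Y1 0) b - condE K (Y0 0) b"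
  proof -
    fix b assume "b \<in> ?S"
    then show "condE K (\<lambda>\<omega>. Y1 0 \<omega> - Y0 0 \<omega>) b = condE K (Y1 0) b - condE K (Y0 0) b"
      using int[OF a(3), of b] by (intro condE_diff) auto
  qed
  show "condE K (DeltaY D Y0 Y1) (ds j) - condE K (DeltaY D Y0 Y1) (ds (j - 1))
             = condE K (\<lambda>\<omega>. Y1 (ds j) \<omega> - Y1 (ds (j - 1)) \<omega>) (ds j)
               + (ATT K Y1 (ds (j - 1)) (ds j) - ATT K Y1 (ds (j - 1)) (ds (j - 1)))"
    using pt key[OF S a(1)] key[OF S a(2)] cd0[OF a(1)] cd0[OF a(2)]
      cd[OF a(1) a(2) a(1)] cd[OF a(2) a(3) a(1)] cd[OF a(2) a(3) a(2)]
    unfolding ATT_def by simp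
next
  fix dL dU f d
  assume H: "continuous_treatment M D Y0 Y1 K dL dU f
        \<and> two_period_setup M D Y0 Y1 K (insert 0 {dL..dU})
        \<and> strong_parallel_trends M K Y0 Y1 (insert 0 {dL..dU})"
    and d: "d \<in> {dL..dU}"
  let ?S = "insert 0 {dL..dU}"
  have S: "two_period_setup M D Y0 Y1 K ?S" and PT: "strong_parallel_trends M K Y0 Y1 ?S" using H by auto
  have intM: "\<And>a. a \<in> ?S \<Longrightarrow> integrable M (Y1 a) \<and> integrable M (Y0 a)"
    and int: "\<And>a b. a \<in> ?S \<Longrightarrow> b \<in> ?S \<Longrightarrow> integrable (K b) (Y1 a) \<and> integrable (K b) (Y0 0)"
    using S unfolding two_period_setup_def by auto
  obtain m' where m': "\<forall>d\<in>{dL..dU}. ((\<lambda>l. condE K (DeltaY D Y0 Y1) l) has_real_derivative m' d)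
                           (at d within {dL..dU})"
    using H unfolding continuous_treatment_def by blast
  have e: "(\<integral>\<omega>. Y1 l \<omega> \<partial>M) = condE K (DeltaY D Y0 Y1) l + (\<integral>\<omega>. Y0 0 \<omega> \<partial>M)" if l: "l \<in> {dL..dU}" for l
  proof -
    have "(\<integral>\<omega>. Y1 l \<omega> - Y0 0 \<omega> \<partial>M) = condE K (\<lambda>\<omega>. Y1 l \<omega> - Y0 0 \<omega>) l"
      using PT l unfolding strong_parallel_trends_def by auto
    moreover have "(\<integral>\<omega>. Y1 l \<omega> - Y0 0 \<omega> \<partial>M) = (\<integral>\<omega>. Y1 l \<omega> \<partial>M) - (\<integral>\<omega>. Y0 0 \<omega> \<partial>M)"
      using intM[of l] intM[of 0] l by (intro Bochner_Integration.integral_diff) auto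
    moreover have "condE K (\<lambda>\<omega>. Y1 l \<omega> - Y0 0 \<omega>) l = condE K (Y1 l) l - condE K (Y0 0) l"
      using condE_diff[of K l "Y1 l" "Y0 0"] int[of l l] l by auto
    ultimately show ?thesis using key[OF S, of l] l by auto
  qed
  show "\<exists>A.
             ((\<lambda>l. \<integral>\<omega>. Y1 l \<omega> \<partial>M) has_real_derivative A) (at d within {dL..dU}) \<and>
             ((\<lambda>l. condE K (DeltaY D Y0 Y1) l) has_real_derivative A) (at d within {dL..dU})"
  proof (intro exI conjI)
    show "((\<lambda>l. condE K (DeltaY D Y0 Y1) l) has_real_derivative m' d) (at d within {dL..dU})"
      using m' d by auto
    show "((\<lambda>l. \<integral>\<omega>. Y1 l \<omega> \<partial>M) has_real_derivative m' d) (at d within {dL..dU})"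
      apply (rule has_field_derivative_transform_within[where d=1, OF _ _ d])
      using DERIV_add[OF bspec[OF m' d] DERIV_const[of "\<integral>\<omega>. Y0 0 \<omega> \<partial>M"]] apply simp
      using e by auto
  qed
next
  fix J ds j
  assume H: "multivalued_treatment M D J ds
        \<and> two_period_setup M D Y0 Y1 K (ds ` {0..J})
        \<and> strong_parallel_trends M K Y0 Y1 (ds ` {0..J})" and j: "j \<in> {1..J}"
  let ?S = "ds ` {0..J}"
  have S: "two_period_setup M D Y0 Y1 K ?S" and PT: "strong_parallel_trends M K Y0 Y1 ?S" using H by auto
  have intM: "\<And>a. a \<in> ?S \<Longrightarrow> integrable M (Y1 a) \<and> integrable M (Y0 a)"
    and int: "\<And>a b. a \<in> ?S \<Longrightarrow> b \<in> ?S \<Longrightarrow> integrable (K b) (Y1 a) \<and> integrable (K b) (Y0 0)"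
    using S unfolding two_period_setup_def by auto
  have z: "ds 0 = 0" using H unfolding multivalued_treatment_def by auto
  have a: "ds j \<in> ?S" "ds (j-1) \<in> ?S" "0 \<in> ?S"
  proof -
    show "ds j \<in> ?S" using j by (intro image_eqI[where x=j]) auto
    show "ds (j-1) \<in> ?S" using j by (intro image_eqI[where x="j-1"]) auto
    show "0 \<in> ?S" using z by (intro image_eqI[where x=0]) auto
  qed
  have e: "condE K (DeltaY D Y0 Y1) l = (\<integral>\<omega>. Y1 l \<omega> \<partial>M) - (\<integral>\<omega>. Y0 0 \<omega> \<partial>M)" if l: "l \<in> ?S" for l
  proof -
    have "(\<integral>\<omega>. Y1 l \<omega> - Y0 0 \<omega> \<partial>M) = condE K (\<lambda>\<omega>. Y1 l \<omega> - Y0 0 \<omega>) l"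
      using PT l unfolding strong_parallel_trends_def by auto
    moreover have "(\<integral>\<omega>. Y1 l \<omega> - Y0 0 \<omega> \<partial>M) = (\<integral>\<omega>. Y1 l \<omega> \<partial>M) - (\<integral>\<omega>. Y0 0 \<omega> \<partial>M)"
      using intM[of l] intM[OF a(3)] l by (intro Bochner_Integration.integral_diff) auto
    moreover have "condE K (\<lambda>\<omega>. Y1 l \<omega> - Y0 0 \<omega>) l = condE K (Y1 l) l - condE K (Y0 0) l"
      using condE_diff[of K l "Y1 l" "Y0 0"] int[of l l] l by auto
    ultimately show ?thesis using key[OF S, of l] l by auto
  qed
  have "(\<integral>\<omega>. Y1 (ds j) \<omega> - Y1 (ds (j - 1)) \<omega> \<partial>M) = (\<integral>\<omega>. Y1 (ds j) \<omega> \<partial>M) - (\<integral>\<omega>. Y1 (ds (j - 1)) \<omega> \<partial>M)"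
    using intM[OF a(1)] intM[OF a(2)] by (intro Bochner_Integration.integral_diff) auto
  then show "condE K (DeltaY D Y0 Y1) (ds j) - condE K (DeltaY D Y0 Y1) (ds (j - 1))
             = (\<integral>\<omega>. Y1 (ds j) \<omega> - Y1 (ds (j - 1)) \<omega> \<partial>M)"
    using e[OF a(1)] e[OF a(2)] by simp
qed

end
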